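(* The diagonal spectral gap satisfies \[ \mathrm{gap}(\mathcal A)\ge\mu^2\Big(\sum_{k\ge0}\frac{\nu^{2k}}{k+r}\Big)^{-1}=\mu^2\nu^{2r}\Big(2\int_0^\nu\frac{s^{2r-1}}{1-s^2}\,ds\Big)^{-1}. \]
   Context: Fix $r>0$ and $0<\lambda<\mu$, put $\nu=\lambda/\mu$ and $\omega_n=n(n+r-1)$. Let $\mathcal A$ be the generator of the birth-and-death process on $\mathbb N$ acting as $(\mathcal Af)_j=\lambda^2\omega_{j+1}(f_{j+1}-f_j)+\mu^2\omega_j(f_{j-1}-f_j)$ (this is the action of the quadratic open quantum harmonic oscillator generator on diagonal operators $\sum_jf_j|e_j\rangle\langle e_j|$). Its invariant measure is $\pi_j=(1-\nu^2)\nu^{2j}$. The (diagonal) spectral gap is \[ \mathrm{gap}(\mathcal A)=\inf\Big\{\sum_{j\ge0}\lambda^2\omega_{j+1}|f_{j+1}-f_j|^2\pi_j:\ \sum_j\pi_j|f_j|^2=1,\ \sum_j\pi_jf_j=0\Big\}, \] which equals the infimum of the Dirichlet form $\mathcal E(\xi)=-\mathrm{Re}\langle\xi,L\xi\rangle$ over unit diagonal Hilbert–Schmidt operators $\xi=\sum_j\pi_j^{1/2}f_j|e_j\rangle\langle e_j|$ orthogonal to $\rho^{1/2}$, $\rho=\sum_j\pi_j|e_j\rangle\langle e_j|$. *)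

theory Defs
  imports "HOL-Analysis.Analysis"
begin

definition omega :: "real \<Rightarrow> nat \<Rightarrow> real" where
  "omega r n = real n * (real n + r - 1)"

definition inv_meas :: "real \<Rightarrow> real \<Rightarrow> nat \<Rightarrow> real" where
  "inv_meas lam mu j = (1 - (lam/mu)^2) * (lam/mu)^(2*j)"

definition admissible :: "real \<Rightarrow> real \<Rightarrow> (nat \<Rightarrow> complex) \<Rightarrow> bool" where
  "admissible lam mu f \<longleftrightarrow>
     summable (\<lambda>j. inv_meas lam mu j * (cmod (f j))^2) \<and>
     (\<Sum>j. inv_meas lam mu j * (cmod (f j))^2) = 1 \<and>
     summable (\<lambda>j. complex_of_real (inv_meas lam mu j) * f j) \<and>
     (\<Sum>j. complex_of_real (inv_meas lam mu j) * f j) = 0"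

definition dirichlet :: "real \<Rightarrow> real \<Rightarrow> real \<Rightarrow> (nat \<Rightarrow> complex) \<Rightarrow> ennreal" where
  "dirichlet r lam mu f =
     (\<Sum>j. ennreal (lam^2 * omega r (Suc j) * (cmod (f (Suc j) - f j))^2 * inv_meas lam mu j))"

definition diag_gap :: "real \<Rightarrow> real \<Rightarrow> real \<Rightarrow> ennreal" where
  "diag_gap r lam mu = (INF f \<in> {f. admissible lam mu f}. dirichlet r lam mu f)"

end

theory Submission
  imports Defs
begin


lemma path_cs:
  fixes f :: "nat \<Rightarrow> complex" and W :: "nat \<Rightarrow> real"
  assumes W: "\<And>j. W j < W (Suc j)" and ik: "i \<le> k"
  shows "(cmod (f k - f i))^2 \<le> (W k - W i) *
           (\<Sum>j\<in>{i..<k}. (cmod (f (Suc j) - f j))^2 / (W (Suc j) - W j))"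
proof -
  define u where "u j = W (Suc j) - W j" for j
  have u: "u j > 0" for j using W[of j] by (simp add: u_def)
  have "f k - f i = (\<Sum>j\<in>{i..<k}. f (Suc j) - f j)" using sum_Suc_diff'[OF ik, of f] by simp
  then have "cmod (f k - f i) \<le> (\<Sum>j\<in>{i..<k}. cmod (f (Suc j) - f j))"
    by (simp add: norm_sum)
  then have "(cmod (f k - f i))^2 \<le> (\<Sum>j\<in>{i..<k}. cmod (f (Suc j) - f j))^2"
    by (intro power_mono) auto
  also have "(\<Sum>j\<in>{i..<k}. cmod (f (Suc j) - f j))
      = (\<Sum>j\<in>{i..<k}. sqrt (u j) * (cmod (f (Suc j) - f j) / sqrt (u j)))"
  proof (intro sum.cong refl)
    fix j have "sqrt (u j) > 0" using u by simp
    then show "cmod (f (Suc j) - f j) = sqrt (u j) * (cmod (f (Suc j) - f j) / sqrt (u j))"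
      by (simp add: field_simps)
  qed
  also have "(\<dots>)^2 \<le> (\<Sum>j\<in>{i..<k}. (sqrt (u j))^2) * (\<Sum>j\<in>{i..<k}. (cmod (f (Suc j) - f j) / sqrt (u j))^2)"
    by (rule Cauchy_Schwarz_ineq_sum)
  also have "(\<Sum>j\<in>{i..<k}. (sqrt (u j))^2) = W k - W i"
    using u sum_Suc_diff'[OF ik, of W] by (simp add: u_def less_imp_le)
  also have "(\<Sum>j\<in>{i..<k}. (cmod (f (Suc j) - f j) / sqrt (u j))^2)
      = (\<Sum>j\<in>{i..<k}. (cmod (f (Suc j) - f j))^2 / (W (Suc j) - W j))"
    using u by (intro sum.cong) (auto simp: power_divide u_def less_imp_le)
  finally show ?thesis .
qed

lemma swap3: "(\<Sum>i\<in>A. \<Sum>k\<in>B. \<Sum>j\<in>C. F i k j) = (\<Sum>j\<in>C. \<Sum>i\<in>A. \<Sum>k\<in>B. F i k j)"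
proof -
  have "(\<Sum>i\<in>A. \<Sum>k\<in>B. \<Sum>j\<in>C. F i k j) = (\<Sum>i\<in>A. \<Sum>j\<in>C. \<Sum>k\<in>B. F i k j)"
    by (rule sum.cong[OF refl], rule sum.swap)
  also have "\<dots> = (\<Sum>j\<in>C. \<Sum>i\<in>A. \<Sum>k\<in>B. F i k j)" by (rule sum.swap)
  finally show ?thesis .
qed

lemma pair_bound:
  fixes f :: "nat \<Rightarrow> complex" and W p :: "nat \<Rightarrow> real"
  assumes W: "\<And>j. W j < W (Suc j)" and p: "\<And>j. p j \<ge> 0"
  shows "(\<Sum>i\<le>N. \<Sum>k\<le>N. p i * p k * (cmod (f i - f k))^2) \<le>
     2 * (\<Sum>j\<le>N. (cmod (f (Suc j) - f j))^2 / (W (Suc j) - W j) *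
        (\<Sum>i\<le>N. \<Sum>k\<le>N. if i \<le> j \<and> j < k then p i * p k * (W k - W i) else 0))"
proof -
  define X where "X i k = p i * p k * (cmod (f i - f k))^2" for i k
  define g where "g j = (cmod (f (Suc j) - f j))^2 / (W (Suc j) - W j)" for j
  have g0: "g j \<ge> 0" for j using W[of j] by (simp add: g_def)
  have split: "X i k = (if i < k then X i k else 0) + (if k < i then X i k else 0)" for i k
    by (cases i k rule: linorder_cases) (auto simp: X_def)
  have sym: "(\<Sum>i\<le>N. \<Sum>k\<le>N. if k < i then X i k else 0) = (\<Sum>i\<le>N. \<Sum>k\<le>N. if i < k then X i k else 0)"
  proof -
    have Xs: "X i k = X k i" for i k by (simp add: X_def norm_minus_commute mult.commute)
    show ?thesis apply (subst sum.swap) apply (intro sum.cong refl) using Xs by metis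
  qed
  have "(\<Sum>i\<le>N. \<Sum>k\<le>N. X i k) = 2 * (\<Sum>i\<le>N. \<Sum>k\<le>N. if i < k then X i k else 0)"
    apply (subst split)
    apply (simp only: sum.distrib sym)
    done
  also have "(\<Sum>i\<le>N. \<Sum>k\<le>N. if i < k then X i k else 0)
     \<le> (\<Sum>i\<le>N. \<Sum>k\<le>N. \<Sum>j\<le>N. if i \<le> j \<and> j < k then g j * (p i * p k * (W k - W i)) else 0)"
  proof (intro sum_mono)
    fix i k assume i: "i \<in> {..N}" and k: "k \<in> {..N}"
    show "(if i < k then X i k else 0) \<le> (\<Sum>j\<le>N. if i \<le> j \<and> j < k then g j * (p i * p k * (W k - W i)) else 0)"
    proof (cases "i < k")
      case True
      have "X i k \<le> p i * p k * ((W k - W i) * (\<Sum>j\<in>{i..<k}. g j))"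
        unfolding X_def g_def
        using path_cs[of W i k f, OF W] True p
        by (intro mult_left_mono) (auto simp: norm_minus_commute)
      also have "(\<Sum>j\<in>{i..<k}. g j) = (\<Sum>j\<le>N. if i \<le> j \<and> j < k then g j else 0)"
      proof -
        have "{j \<in> {..N}. i \<le> j \<and> j < k} = {i..<k}" using k by auto
        then show ?thesis by (simp add: sum.inter_filter[symmetric])
      qed
      also have "p i * p k * ((W k - W i) * (\<Sum>j\<le>N. if i \<le> j \<and> j < k then g j else 0))
          = (\<Sum>j\<le>N. if i \<le> j \<and> j < k then g j * (p i * p k * (W k - W i)) else 0)"
        by (simp add: sum_distrib_left if_distrib mult_ac cong: if_cong)
      finally show ?thesis using True by simp
    next
      case False
      then have "\<And>j. \<not>(i \<le> j \<and> j < k)" by auto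
      then have "(\<Sum>j\<le>N. if i \<le> j \<and> j < k then g j * (p i * p k * (W k - W i)) else 0) = 0"
        by (intro sum.neutral) auto
      then show ?thesis using False by simp
    qed
  qed
  also have "\<dots> = (\<Sum>j\<le>N. \<Sum>i\<le>N. \<Sum>k\<le>N. if i \<le> j \<and> j < k then g j * (p i * p k * (W k - W i)) else 0)"
    by (rule swap3)
  also have "\<dots> = (\<Sum>j\<le>N. g j * (\<Sum>i\<le>N. \<Sum>k\<le>N. if i \<le> j \<and> j < k then p i * p k * (W k - W i) else 0))"
    by (simp add: sum_distrib_left if_distrib cong: if_cong)
  finally show ?thesis unfolding X_def g_def by simp
qed



lemma S_summable:
  fixes r v :: real assumes "r > 0" "0 \<le> v" "v < 1"
  shows "summable (\<lambda>k. v^(2*k) / (real k + r))"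
proof (rule summable_comparison_test')
  show "summable (\<lambda>k. (v^2)^k / r)"
    using assms by (intro summable_divide summable_geometric) (simp add: abs_square_less_1)
  fix k :: nat
  have "v^(2*k) / (real k + r) \<le> v^(2*k) / r"
    using assms by (intro divide_left_mono) auto
  then show "norm (v^(2*k) / (real k + r)) \<le> (v^2)^k / r"
    using assms by (simp add: power_mult)
qed

lemma integral_identity:
  fixes r v :: real assumes r: "r > 0" and v: "0 < v" "v < 1"
  shows "integral {0..v} (\<lambda>s. s powr (2*r - 1) / (1 - s^2))
          = v powr (2*r) * (\<Sum>k. v^(2*k) / (real k + r)) / 2"
proof -
  define F where "F = (\<lambda>N s. \<Sum>k<N. s powr (2*r - 1 + 2 * real k))"
  define g where "g = (\<lambda>s::real. s powr (2*r - 1) / (1 - s^2))"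
  define S where "S = (\<Sum>k. v^(2*k) / (real k + r))"
  have hk: "((\<lambda>s. s powr (2*r - 1 + 2 * real k)) has_integral
            (v powr (2*r) * (v^(2*k) / (real k + r)) / 2)) {0..v}" for k
  proof -
    have "((\<lambda>s. s powr (2*r - 1 + 2 * real k)) has_integral
            (v powr (2*r - 1 + 2 * real k + 1) / (2*r - 1 + 2 * real k + 1))) {0..v}"
      using r v by (intro has_integral_powr_from_0) auto
    moreover have "v powr (2*r - 1 + 2 * real k + 1) / (2*r - 1 + 2 * real k + 1)
        = v powr (2*r) * (v^(2*k) / (real k + r)) / 2"
    proof -
      have "v powr (2*r - 1 + 2 * real k + 1) = v powr (2*r) * v powr (real (2*k))"
        by (simp add: powr_add[symmetric])
      also have "v powr (real (2*k)) = v^(2*k)" using v by (subst powr_realpow) auto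
      finally show ?thesis using r by (simp add: field_simps)
    qed
    ultimately show ?thesis by simp
  qed
  have FI: "(F N has_integral (\<Sum>k<N. v powr (2*r) * (v^(2*k) / (real k + r)) / 2)) {0..v}" for N
    unfolding F_def by (intro has_integral_sum) (use hk in blast)+
  have mono: "F N s \<le> F (Suc N) s" if "s \<in> {0..v}" for N s
    unfolding F_def by simp
  have lim: "(\<lambda>N. F N s) \<longlonglongrightarrow> g s" if "s \<in> {0..v}" for s
  proof (cases "s = 0")
    case True then show ?thesis by (simp add: F_def g_def)
  next
    case False
    with that have s: "0 < s" "s < 1" using v by auto
    have eq: "F N s = s powr (2*r - 1) * (\<Sum>k<N. (s^2)^k)" for N
      unfolding F_def sum_distrib_left
    proof (rule sum.cong)
      fix k assume "k \<in> {..<N}"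
      have "s powr (2*r - 1 + 2 * real k) = s powr (2*r - 1) * s powr (real (2*k))"
        by (simp add: powr_add[symmetric])
      also have "s powr (real (2*k)) = (s^2)^k" using s by (subst powr_realpow) (auto simp: power_mult)
      finally show "s powr (2*r - 1 + 2 * real k) = s powr (2*r - 1) * (s^2)^k" .
    qed simp
    have "(\<lambda>k. (s^2)^k) sums (1 / (1 - s^2))"
      using s by (intro geometric_sums) (simp add: abs_square_less_1)
    then have "(\<lambda>N. \<Sum>k<N. (s^2)^k) \<longlonglongrightarrow> 1 / (1 - s^2)" by (simp add: sums_def)
    then have "(\<lambda>N. s powr (2*r - 1) * (\<Sum>k<N. (s^2)^k)) \<longlonglongrightarrow> s powr (2*r - 1) * (1 / (1 - s^2))"
      by (intro tendsto_mult tendsto_const)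
    then show ?thesis unfolding eq g_def by simp
  qed
  have sumS: "(\<lambda>k. v powr (2*r) * (v^(2*k) / (real k + r)) / 2) sums (v powr (2*r) * S / 2)"
    unfolding S_def using S_summable[OF r less_imp_le[OF v(1)] v(2)]
    by (intro sums_divide sums_mult summable_sums)
  then have limI: "(\<lambda>N. integral {0..v} (F N)) \<longlonglongrightarrow> v powr (2*r) * S / 2"
  proof -
    have "integral {0..v} (F N) = (\<Sum>k<N. v powr (2*r) * (v^(2*k) / (real k + r)) / 2)" for N
      using FI integral_unique by blast
    then show ?thesis using sumS by (simp only: sums_def)
  qed
  have bnd: "bounded (range (\<lambda>N. integral {0..v} (F N)))"
    using limI by (metis Bseq_eq_bounded convergent_imp_Bseq convergentI)
  have "g integrable_on {0..v} \<and> (\<lambda>N. integral {0..v} (F N)) \<longlonglongrightarrow> integral {0..v} g"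
    by (rule monotone_convergence_increasing[OF _ mono lim bnd]) (use FI in blast)
  then have "integral {0..v} g = v powr (2*r) * S / 2"
    using limI LIMSEQ_unique by blast
  then show ?thesis by (simp add: g_def S_def)
qed



lemma G_bound:
  fixes x r :: real and j N :: nat
  assumes x: "0 < x" "x < 1" and r: "r > 0"
  defines "S \<equiv> (\<Sum>k. x^k / (real k + r))"
  shows "(\<Sum>i\<le>N. \<Sum>k\<le>N. if i \<le> j \<and> j < k then
            ((1-x)*x^i) * ((1-x)*x^k) * (-1/(real k + r) - -1/(real i + r)) else 0)
         \<le> S * x^(Suc j) * (1-x) * (real j + 1) / (real j + r + 1)"
proof -
  define H where "H = (\<Sum>i<Suc j. x^i / (real i + r))"
  define P where "P = (\<Sum>i<Suc j. x^i)"
  define c where "c k = (\<Sum>i<Suc j. (1-x)*x^i * (-1/(real k + r) - -1/(real i + r)))" for k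
  define h where "h n = (if j < n then (1-x)*x^n * c n else 0)" for n
  define t where "t k = x^k / (real k + r)" for k
  define R where "R = (\<Sum>m. t (m + Suc j))"
  define Q where "Q = x^(Suc j)"
  have tsum: "summable t"
  proof (rule summable_comparison_test')
    show "summable (\<lambda>k. x^k / r)" using x by (intro summable_divide summable_geometric) auto
    fix k :: nat
    show "norm (t k) \<le> x^k / r" unfolding t_def using x r by (auto intro!: divide_left_mono)
  qed
  have Rsum: "summable (\<lambda>m. t (m + Suc j))" using tsum by (simp only: summable_iff_shift)
  have cform: "c k = (1-x) * H - (1-x) * P / (real k + r)" for k
  proof -
    have "c k = (\<Sum>i<Suc j. (1-x) * (x^i/(real i + r)) - ((1-x) * x^i) / (real k + r))"
      unfolding c_def by (intro sum.cong refl) (simp add: algebra_simps diff_divide_distrib)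
    also have "\<dots> = (1-x) * H - (1-x) * P / (real k + r)"
      unfolding H_def P_def
      by (simp only: sum_subtractf sum_distrib_left[symmetric] sum_divide_distrib[symmetric])
    finally show ?thesis .
  qed
  have c0: "c k \<ge> 0" if "j < k" for k
    unfolding c_def
  proof (intro sum_nonneg)
    fix i assume "i \<in> {..<Suc j}"
    then have "real i + r \<le> real k + r" "0 < real i + r" using that r by auto
    then have "1/(real k + r) \<le> 1/(real i + r)" by (intro divide_left_mono) auto
    then show "0 \<le> (1-x)*x^i * (-1/(real k + r) - -1/(real i + r))" using x by auto
  qed
  have h0: "h n \<ge> 0" for n unfolding h_def using c0 x by auto
  have step1: "(\<Sum>i\<le>N. \<Sum>k\<le>N. if i \<le> j \<and> j < k then
            ((1-x)*x^i) * ((1-x)*x^k) * (-1/(real k + r) - -1/(real i + r)) else 0) = sum h {..N}"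
  proof -
    have "(\<Sum>i\<le>N. \<Sum>k\<le>N. if i \<le> j \<and> j < k then
            ((1-x)*x^i) * ((1-x)*x^k) * (-1/(real k + r) - -1/(real i + r)) else 0)
       = (\<Sum>k\<le>N. \<Sum>i\<le>N. if i \<le> j \<and> j < k then
            ((1-x)*x^i) * ((1-x)*x^k) * (-1/(real k + r) - -1/(real i + r)) else 0)"
      by (rule sum.swap)
    also have "\<dots> = sum h {..N}"
    proof (rule sum.cong[OF refl])
      fix k assume k: "k \<in> {..N}"
      show "(\<Sum>i\<le>N. if i \<le> j \<and> j < k then
            ((1-x)*x^i) * ((1-x)*x^k) * (-1/(real k + r) - -1/(real i + r)) else 0) = h k"
      proof (cases "j < k")
        case True
        have fil: "{i \<in> {..N}. i \<le> j} = {..<Suc j}" using True k by auto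
        have "(\<Sum>i\<le>N. if i \<le> j \<and> j < k then
            ((1-x)*x^i) * ((1-x)*x^k) * (-1/(real k + r) - -1/(real i + r)) else 0)
          = (\<Sum>i\<le>N. if i \<le> j then
            ((1-x)*x^i) * ((1-x)*x^k) * (-1/(real k + r) - -1/(real i + r)) else 0)"
          using True by simp
        also have "\<dots> = (\<Sum>i\<in>{..<Suc j}. ((1-x)*x^i) * ((1-x)*x^k) * (-1/(real k + r) - -1/(real i + r)))"
          by (simp only: sum.inter_filter[symmetric, OF finite_atMost] fil)
        also have "\<dots> = h k"
          unfolding h_def c_def if_P[OF True] sum_distrib_left
          by (intro sum.cong refl) (simp add: mult_ac)
        finally show ?thesis .
      next
        case False
        then show ?thesis by (simp add: h_def)
      qed
    qed
    finally show ?thesis .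
  qed
  have hshift: "h (m + Suc j) = (1-x)^2 * (H * (x^Suc j * x^m)) - (1-x)^2 * P * t (m + Suc j)" for m
  proof -
    have "1 + (r + (real j + real m)) > 0" using r by simp
    then show ?thesis
      unfolding h_def cform t_def by (simp add: power_add power2_eq_square field_simps)
  qed
  have geo: "(\<lambda>m. x^Suc j * x^m) sums (x^Suc j / (1 - x))"
    using sums_mult[OF geometric_sums[of x], of "x^Suc j"] x by (simp add: field_simps)
  have hsums: "(\<lambda>m. h (m + Suc j)) sums ((1-x)^2 * (H * (Q / (1-x))) - (1-x)^2 * P * R)"
    unfolding hshift Q_def R_def
    by (intro sums_diff sums_mult geo summable_sums Rsum)
  then have hsum: "summable h" using summable_iff_shift[of h "Suc j"] sums_summable by blast
  have "sum h {..N} \<le> suminf h"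
    by (rule sum_le_suminf[OF hsum]) (auto intro: h0)
  also have "suminf h = (\<Sum>m. h (m + Suc j))"
    using suminf_split_initial_segment[OF hsum, of "Suc j"] by (simp add: h_def)
  also have "\<dots> = (1-x)^2 * (H * (Q / (1-x))) - (1-x)^2 * P * R"
    using hsums sums_unique by metis
  also have "\<dots> = (1-x) * (Q * S - R)"
  proof -
    have SHR: "S = R + H"
      using suminf_split_initial_segment[OF tsum, of "Suc j"]
      by (simp add: S_def R_def H_def t_def[abs_def])
    have PQ: "(1-x) * P = 1 - Q" unfolding P_def Q_def by (rule one_diff_power_eq[symmetric])
    have "(1-x)^2 * (H * (Q / (1-x))) - (1-x)^2 * P * R = (1-x) * (H * Q - ((1-x) * P) * R)"
      using x by (simp add: power2_eq_square field_simps)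
    also have "\<dots> = (1-x) * (Q * S - R)" unfolding PQ SHR by (simp add: algebra_simps)
    finally show ?thesis .
  qed
  also have "\<dots> \<le> S * x^(Suc j) * (1-x) * (real j + 1) / (real j + r + 1)"
  proof -
    have key: "r * (Q * S) \<le> (real j + 1 + r) * R"
    proof -
      have s1: "(\<lambda>m. r * Q * t m) sums (r * Q * S)"
        unfolding S_def t_def by (intro sums_mult summable_sums tsum[unfolded t_def])
      have s2: "(\<lambda>m. (real j + 1 + r) * t (m + Suc j)) sums ((real j + 1 + r) * R)"
        unfolding R_def by (intro sums_mult summable_sums Rsum)
      have le: "r * Q * t m \<le> (real j + 1 + r) * t (m + Suc j)" for m
      proof -
        have "r / (real m + r) \<le> (real j + 1 + r) / (real m + real j + 1 + r)"
          using r by (simp add: divide_simps) (simp add: algebra_simps)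
        then have "r / (real m + r) * (Q * x^m) \<le> (real j + 1 + r) / (real m + real j + 1 + r) * (Q * x^m)"
          using x by (intro mult_right_mono) (auto simp: Q_def)
        then show ?thesis unfolding t_def Q_def by (simp add: power_add mult_ac add_ac)
      qed
      have "r * Q * S \<le> (real j + 1 + r) * R" by (rule sums_le[OF le s1 s2])
      then show ?thesis by (simp add: mult.assoc)
    qed
    have "(Q * S - R) * (real j + r + 1) \<le> S * Q * (real j + 1)"
      using key by (simp add: algebra_simps)
    then have "Q * S - R \<le> S * Q * (real j + 1) / (real j + r + 1)"
      using r by (simp add: field_simps)
    then have "(1-x) * (Q * S - R) \<le> (1-x) * (S * Q * (real j + 1) / (real j + r + 1))"
      using x by (intro mult_left_mono) auto
    then show ?thesis by (simp add: Q_def mult_ac)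
  qed
  finally show ?thesis using step1 by simp
qed



lemma cmod_diff_sq: "(cmod (a - b))^2 = (cmod a)^2 + (cmod b)^2 - 2 * Re (a * cnj b)"
  unfolding cmod_power2 by (simp add: power2_eq_square algebra_simps)

lemma pair_identity:
  fixes p :: "nat \<Rightarrow> real" and f :: "nat \<Rightarrow> complex"
  shows "(\<Sum>i\<in>A. \<Sum>k\<in>A. p i * p k * (cmod (f i - f k))^2)
     = 2 * (\<Sum>i\<in>A. p i) * (\<Sum>i\<in>A. p i * (cmod (f i))^2)
       - 2 * (cmod (\<Sum>i\<in>A. complex_of_real (p i) * f i))^2"
proof -
  have M: "(cmod (\<Sum>i\<in>A. complex_of_real (p i) * f i))^2
      = (\<Sum>i\<in>A. \<Sum>k\<in>A. p i * p k * Re (f i * cnj (f k)))"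
  proof -
    have "complex_of_real ((cmod (\<Sum>i\<in>A. complex_of_real (p i) * f i))^2)
        = (\<Sum>i\<in>A. complex_of_real (p i) * f i) * cnj (\<Sum>k\<in>A. complex_of_real (p k) * f k)"
      by (rule complex_norm_square)
    also have "\<dots> = (\<Sum>i\<in>A. \<Sum>k\<in>A. (complex_of_real (p i) * f i) * cnj (complex_of_real (p k) * f k))"
      by (simp add: cnj_sum sum_product)
    finally have "(cmod (\<Sum>i\<in>A. complex_of_real (p i) * f i))^2
        = Re (\<Sum>i\<in>A. \<Sum>k\<in>A. (complex_of_real (p i) * f i) * cnj (complex_of_real (p k) * f k))"
      by (metis Re_complex_of_real)
    also have "\<dots> = (\<Sum>i\<in>A. \<Sum>k\<in>A. p i * p k * Re (f i * cnj (f k)))"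
      by (simp add: Re_sum algebra_simps)
    finally show ?thesis .
  qed
  have "(\<Sum>i\<in>A. \<Sum>k\<in>A. p i * p k * (cmod (f i - f k))^2)
     = (\<Sum>i\<in>A. \<Sum>k\<in>A. p i * p k * (cmod (f i))^2 + p i * p k * (cmod (f k))^2
          - 2 * (p i * p k * Re (f i * cnj (f k))))"
    by (simp add: cmod_diff_sq algebra_simps)
  also have "\<dots> = 2 * (\<Sum>i\<in>A. p i) * (\<Sum>i\<in>A. p i * (cmod (f i))^2)
       - 2 * (\<Sum>i\<in>A. \<Sum>k\<in>A. p i * p k * Re (f i * cnj (f k)))"
  proof -
    have a: "(\<Sum>i\<in>A. \<Sum>k\<in>A. p i * p k * (cmod (f i))^2) = (\<Sum>i\<in>A. p i) * (\<Sum>i\<in>A. p i * (cmod (f i))^2)"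
    proof -
      have "(\<Sum>i\<in>A. \<Sum>k\<in>A. p i * p k * (cmod (f i))^2) = (\<Sum>k\<in>A. \<Sum>i\<in>A. p i * p k * (cmod (f i))^2)"
        by (rule sum.swap)
      also have "\<dots> = (\<Sum>i\<in>A. p i) * (\<Sum>i\<in>A. p i * (cmod (f i))^2)"
        by (simp only: sum_product) (simp add: mult_ac)
      finally show ?thesis .
    qed
    have b: "(\<Sum>i\<in>A. \<Sum>k\<in>A. p i * p k * (cmod (f k))^2) = (\<Sum>i\<in>A. p i) * (\<Sum>i\<in>A. p i * (cmod (f i))^2)"
      by (simp only: sum_product) (simp add: mult_ac)
    show ?thesis
      by (simp add: sum.distrib sum_subtractf a b sum_distrib_left[symmetric])
  qed
  finally show ?thesis using M by simp
qed



lemma term_alg: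
  fixes r mu lam x S D :: real and j :: nat
  assumes r: "r > 0" and mu: "mu > 0" and lamx: "lam^2 = x * mu^2"
  shows "D / (-1/(real (Suc j) + r) - -1/(real j + r)) *
           (S * x^(Suc j) * (1-x) * (real j + 1) / (real j + r + 1))
       = S / mu^2 * (lam^2 * omega r (Suc j) * D * ((1-x)*x^j))"
proof -
  have w: "-1/(real (Suc j) + r) - -1/(real j + r) = 1 / ((real j + r) * (real j + r + 1))"
    using r by (simp add: field_simps)
  show ?thesis unfolding w lamx omega_def using r mu
    by (simp add: field_simps)
qed

theorem theorem6p10:
  fixes r lam mu :: real
  assumes "r > 0" and "0 < lam" and "lam < mu"
  defines "\<nu> \<equiv> lam / mu"
  shows "diag_gap r lam mu \<ge> ennreal (mu^2 / (\<Sum>k. \<nu>^(2*k) / (real k + r)))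
    \<and> mu^2 / (\<Sum>k. \<nu>^(2*k) / (real k + r))
        = mu^2 * \<nu> powr (2*r) /
          (2 * integral {0..\<nu>} (\<lambda>s. s powr (2*r - 1) / (1 - s^2)))"
proof -
  have r: "r > 0" using assms by simp
  have mu: "mu > 0" using assms by simp
  have v: "0 < \<nu>" "\<nu> < 1" using assms by (simp_all add: \<nu>_def field_simps)
  define x where "x = \<nu>^2"
  have x: "0 < x" "x < 1" using v by (simp_all add: x_def power_less_one_iff)
  define S where "S = (\<Sum>k. x^k / (real k + r))"
  have Seq: "(\<Sum>k. \<nu>^(2*k) / (real k + r)) = S" by (simp add: S_def x_def power_mult)
  have Ssum: "summable (\<lambda>k. x^k / (real k + r))"
    using S_summable[OF r, of \<nu>] v by (simp add: x_def power_mult)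
  have Spos: "S > 0" unfolding S_def
    by (rule suminf_pos[OF Ssum]) (use x r in auto)
  have lamx: "lam^2 = x * mu^2" using mu by (simp add: x_def \<nu>_def power_divide)
  have pi: "inv_meas lam mu j = (1-x)*x^j" for j
    by (simp add: inv_meas_def x_def \<nu>_def power_mult)
  have part2: "mu^2 / S = mu^2 * \<nu> powr (2*r) / (2 * integral {0..\<nu>} (\<lambda>s. s powr (2*r - 1) / (1 - s^2)))"
  proof -
    have "integral {0..\<nu>} (\<lambda>s. s powr (2*r - 1) / (1 - s^2)) = \<nu> powr (2*r) * S / 2"
      using integral_identity[OF r v] Seq by simp
    moreover have "\<nu> powr (2*r) > 0" using v by simp
    ultimately show ?thesis using Spos by (simp add: field_simps)
  qed
  have part1: "ennreal (mu^2 / S) \<le> diag_gap r lam mu"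
    unfolding diag_gap_def
  proof (rule INF_greatest)
    fix f assume "f \<in> {f. admissible lam mu f}"
    then have adm: "admissible lam mu f" by simp
    define tm where "tm j = lam^2 * omega r (Suc j) * (cmod (f (Suc j) - f j))^2 * inv_meas lam mu j" for j
    have t0: "tm j \<ge> 0" for j
      unfolding tm_def pi omega_def using x r by (auto intro!: mult_nonneg_nonneg)
    have dir: "dirichlet r lam mu f = (\<Sum>j. ennreal (tm j))"
      unfolding dirichlet_def tm_def by simp
    show "ennreal (mu^2 / S) \<le> dirichlet r lam mu f"
    proof (cases "summable tm")
      case False
      then have "(\<Sum>j. ennreal (tm j)) = top" using summable_suminf_not_top t0 by blast
      then show ?thesis unfolding dir by simp
    next
      case True
      have dir2: "dirichlet r lam mu f = ennreal (suminf tm)"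
        unfolding dir using suminf_ennreal2[OF t0 True] by simp
      define p where "p = (\<lambda>i. (1-x)*x^i)"
      define W where "W = (\<lambda>k. -1/(real k + r))"
      have Wm: "W j < W (Suc j)" for j
        unfolding W_def using r by (simp add: field_simps)
      have p0: "p j \<ge> 0" for j unfolding p_def using x by simp
      define Qs where "Qs N = (\<Sum>i\<le>N. \<Sum>k\<le>N. p i * p k * (cmod (f i - f k))^2)" for N
      have bound: "Qs N \<le> 2 * (S/mu^2) * suminf tm" for N
      proof -
        have "Qs N \<le> 2 * (\<Sum>j\<le>N. (cmod (f (Suc j) - f j))^2 / (W (Suc j) - W j) *
          (\<Sum>i\<le>N. \<Sum>k\<le>N. if i \<le> j \<and> j < k then p i * p k * (W k - W i) else 0))"
          unfolding Qs_def by (rule pair_bound[of W p, OF Wm p0])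
        also have "\<dots> \<le> 2 * (\<Sum>j\<le>N. (cmod (f (Suc j) - f j))^2 / (W (Suc j) - W j) *
          (S * x^(Suc j) * (1-x) * (real j + 1) / (real j + r + 1)))"
        proof (rule mult_left_mono[OF sum_mono])
          fix j
          have "0 \<le> (cmod (f (Suc j) - f j))^2 / (W (Suc j) - W j)" using Wm[of j] by simp
          moreover have "(\<Sum>i\<le>N. \<Sum>k\<le>N. if i \<le> j \<and> j < k then p i * p k * (W k - W i) else 0)
              \<le> S * x^(Suc j) * (1-x) * (real j + 1) / (real j + r + 1)"
            unfolding p_def W_def S_def by (rule G_bound[OF x r])
          ultimately show "(cmod (f (Suc j) - f j))^2 / (W (Suc j) - W j) *
              (\<Sum>i\<le>N. \<Sum>k\<le>N. if i \<le> j \<and> j < k then p i * p k * (W k - W i) else 0)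
            \<le> (cmod (f (Suc j) - f j))^2 / (W (Suc j) - W j) *
              (S * x^(Suc j) * (1-x) * (real j + 1) / (real j + r + 1))"
            by (intro mult_left_mono) (simp_all only:)
        qed simp
        also have "\<dots> = 2 * (S/mu^2 * (\<Sum>j\<le>N. tm j))"
          unfolding sum_distrib_left
          by (intro arg_cong[where f="\<lambda>t. 2 * t"] sum.cong refl)
             (simp only: W_def tm_def pi term_alg[OF r mu lamx])
        also have "\<dots> \<le> 2 * (S/mu^2 * suminf tm)"
          using Spos mu by (intro mult_left_mono sum_le_suminf[OF True]) (auto intro: t0)
        finally show ?thesis by simp
      qed
      have pform: "inv_meas lam mu = p" by (rule ext) (simp add: pi p_def)
      have psums: "p sums 1"
      proof -
        have "(\<lambda>i. (1-x) * x^i) sums ((1-x) * (1 / (1-x)))"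
          by (intro sums_mult geometric_sums) (use x in auto)
        then show ?thesis using x by (simp add: p_def)
      qed
      have l1: "(\<lambda>N. \<Sum>i\<le>N. p i) \<longlonglongrightarrow> 1"
        using summable_LIMSEQ'[OF sums_summable[OF psums]] sums_unique[OF psums] by simp
      have V: "summable (\<lambda>j. p j * (cmod (f j))^2)" "(\<Sum>j. p j * (cmod (f j))^2) = 1"
        using adm unfolding admissible_def pform by auto
      have M: "summable (\<lambda>j. complex_of_real (p j) * f j)" "(\<Sum>j. complex_of_real (p j) * f j) = 0"
        using adm unfolding admissible_def pform by auto
      have l2: "(\<lambda>N. \<Sum>i\<le>N. p i * (cmod (f i))^2) \<longlonglongrightarrow> 1"
        using summable_LIMSEQ'[OF V(1)] V(2) by simp
      have l3: "(\<lambda>N. \<Sum>i\<le>N. complex_of_real (p i) * f i) \<longlonglongrightarrow> 0"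
        using summable_LIMSEQ'[OF M(1)] M(2) by simp
      have Qeq: "Qs N = 2 * (\<Sum>i\<le>N. p i) * (\<Sum>i\<le>N. p i * (cmod (f i))^2)
           - 2 * (cmod (\<Sum>i\<le>N. complex_of_real (p i) * f i))^2" for N
        unfolding Qs_def by (rule pair_identity)
      have "(\<lambda>N. 2 * (\<Sum>i\<le>N. p i) * (\<Sum>i\<le>N. p i * (cmod (f i))^2)
           - 2 * (cmod (\<Sum>i\<le>N. complex_of_real (p i) * f i))^2) \<longlonglongrightarrow> 2 * 1 * 1 - 2 * (cmod 0)^2"
        by (intro tendsto_intros l1 l2 l3)
      then have lim: "Qs \<longlonglongrightarrow> 2" unfolding Qeq[abs_def] by simp
      have "2 \<le> 2 * (S/mu^2) * suminf tm"
        by (rule LIMSEQ_le_const2[OF lim]) (use bound in auto)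
      then have "mu^2 \<le> S * suminf tm" using mu by (simp add: field_simps)
      then have "mu^2 / S \<le> suminf tm" using Spos by (simp add: field_simps)
      then show ?thesis unfolding dir2 by (rule ennreal_leI)
    qed
  qed
  show ?thesis using part1 part2 Seq by simp
qed


end
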